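(* Let $n\ge 1$ be an integer, $a_0,\dots,a_n$ real constants, $p\in\{1,2,3,4\}$, and let $A^{j+k}_p,B^{j+k}_p$ ($|k|\le p$), $\mathcal{A}(\Lambda)$, $\mathcal{B}(\Lambda)$ and $C_{p+2}$ be as defined in the context (computed with the optimally blended quadrature rule). Fix a frequency $\omega>0$ and, for a mesh size $h>0$, let $\tilde\lambda^h$ be the approximate eigenvalue associated with the Bloch wave $U^j=e^{ij\omega h}$ in the mixed isogeometric discretization of $\mathcal{L}=\sum_{m=0}^n a_m(-\Delta)^m$, i.e. the number satisfying $$\Big(\sum_{m=1}^n a_m\,\omega^{2m-2}\Big)\mathcal{A}(\omega h)=(\tilde\lambda^h-a_0)\,\mathcal{B}(\omega h)\,h^2 .$$ Then, as $h\to 0$, $$\tilde\lambda^h-\sum_{k=0}^n a_k\,\omega^{2k}=\Big(C_{p+2}\sum_{k=1}^n a_k\,\omega^{2k}\Big)(\omega h)^{2p+2}+\mathcal{O}(h^{2p+4}).$$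
   Context: Setting: the $2n$-order eigenvalue problem $\mathcal{L}u=\lambda u$ with $\mathcal{L}=\sum_{m=0}^n a_m(-\Delta)^m$ is written in mixed form with auxiliary fields $\psi^0=u$, $\psi^m=-\Delta\psi^{m-1}$ ($m=1,\dots,n-1$), and discretized with $C^{p-1}$ B-splines of degree $p$ on a uniform 1D mesh of size $h$; with the Bloch ansatz $\Psi^{m,j}=\omega^{2m}e^{ij\omega h}$ for the coefficients of $\psi^m_h$ and elimination of the auxiliary fields, one obtains the defining relation for $\tilde\lambda^h$ given in the claim. B-splines: on knots $x_j=jh$, $\theta^j_0=1$ on $[x_j,x_{j+1})$ and $0$ otherwise, $\theta^j_p(x)=\frac{x-x_j}{x_{j+p}-x_j}\theta^j_{p-1}(x)+\frac{x_{j+p+1}-x}{x_{j+p+1}-x_{j+1}}\theta^{j+1}_{p-1}(x)$. Discrete forms: $a_h(w,v)=\sum_K\sum_l\varpi_{l,K}w'(n_{l,K})v'(n_{l,K})$, $b_h(w,v)=\sum_K\sum_l\varpi_{l,K}w(n_{l,K})v(n_{l,K})$, using elementwise the optimally blended rule $\tau_pG_{p+1}+(1-\tau_p)L_{p+1}$ ($G_l$: $l$-point Gauss–Legendre, $L_l$: $l$-point Gauss–Lobatto), with $\tau_1=\tfrac12,\tau_2=\tfrac13,\tau_3=-\tfrac32,\tau_4=-\tfrac{79}{5}$. For an interior index $j$: $A^{j+k}_p=h\,a_h(\theta^{j+k}_p,\theta^j_p)$, $B^{j+k}_p=\frac1h b_h(\theta^{j+k}_p,\theta^j_p)$ ($|k|\le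 p$), independent of $h$ and $j$; $\mathcal{A}(\Lambda)=A^j_p+2\sum_{k=1}^pA^{j+k}_p\cos(k\Lambda)$, $\mathcal{B}(\Lambda)=B^j_p+2\sum_{k=1}^pB^{j+k}_p\cos(k\Lambda)$; $C_{p+2}=2(-1)^p\sum_{k=1}^p\big(\frac{k^{2p+4}}{(2p+4)!}A^{j+k}_p+\frac{k^{2p+2}}{(2p+2)!}B^{j+k}_p\big)$. The quantity $\sum_{k=0}^n a_k\omega^{2k}$ is the exact eigenvalue of $\mathcal{L}$ for frequency $\omega$ (e.g. $\omega=j\pi$ on $[0,1]$). *)

theory Defs
  imports "HOL-Analysis.Analysis" "HOL-Library.Landau_Symbols"
begin

definition knot :: "real \<Rightarrow> int \<Rightarrow> real" where
  "knot h j = real_of_int j * h"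

fun bspline :: "real \<Rightarrow> nat \<Rightarrow> int \<Rightarrow> real \<Rightarrow> real" where
  "bspline h 0 j x = (if knot h j \<le> x \<and> x < knot h (j + 1) then 1 else 0)"
| "bspline h (Suc q) j x =
     (x - knot h j) / (knot h (j + int (Suc q)) - knot h j) * bspline h q j x
   + (knot h (j + int (Suc q) + 1) - x) / (knot h (j + int (Suc q) + 1) - knot h (j + 1))
       * bspline h q (j + 1) x"

definition gauss_rule :: "nat \<Rightarrow> (real \<times> real) list" where
  "gauss_rule l =
    (if l = 2 then [(- 1 / sqrt 3, 1), (1 / sqrt 3, 1)]
     else if l = 3 then [(- sqrt (3/5), 5/9), (0, 8/9), (sqrt (3/5), 5/9)]
     else if l = 4 then
       [(- sqrt (3/7 + 2/7 * sqrt (6/5)), (18 - sqrt 30) / 36),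
        (- sqrt (3/7 - 2/7 * sqrt (6/5)), (18 + sqrt 30) / 36),
        (sqrt (3/7 - 2/7 * sqrt (6/5)), (18 + sqrt 30) / 36),
        (sqrt (3/7 + 2/7 * sqrt (6/5)), (18 - sqrt 30) / 36)]
     else if l = 5 then
       [(- (1/3) * sqrt (5 + 2 * sqrt (10/7)), (322 - 13 * sqrt 70) / 900),
        (- (1/3) * sqrt (5 - 2 * sqrt (10/7)), (322 + 13 * sqrt 70) / 900),
        (0, 128/225),
        ((1/3) * sqrt (5 - 2 * sqrt (10/7)), (322 + 13 * sqrt 70) / 900),
        ((1/3) * sqrt (5 + 2 * sqrt (10/7)), (322 - 13 * sqrt 70) / 900)]
     else [])"

definition lobatto_rule :: "nat \<Rightarrow> (real \<times> real) list" where
  "lobatto_rule l =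
    (if l = 2 then [(- 1, 1), (1, 1)]
     else if l = 3 then [(- 1, 1/3), (0, 4/3), (1, 1/3)]
     else if l = 4 then [(- 1, 1/6), (- 1 / sqrt 5, 5/6), (1 / sqrt 5, 5/6), (1, 1/6)]
     else if l = 5 then
       [(- 1, 1/10), (- sqrt (3/7), 49/90), (0, 32/45), (sqrt (3/7), 49/90), (1, 1/10)]
     else [])"

definition blend_tau :: "nat \<Rightarrow> real" where
  "blend_tau p = (if p = 1 then 1/2 else if p = 2 then 1/3 else if p = 3 then - 3/2
                  else if p = 4 then - 79/5 else 0)"

definition blended_rule :: "nat \<Rightarrow> (real \<times> real) list" where
  "blended_rule p =
     map (\<lambda>(\<xi>, w). (\<xi>, blend_tau p * w)) (gauss_rule (p + 1))
   @ map (\<lambda>(\<xi>, w). (\<xi>, (1 - blend_tau p) * w)) (lobatto_rule (p + 1))"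

definition elem_node :: "real \<Rightarrow> int \<Rightarrow> real \<Rightarrow> real" where
  "elem_node h i \<xi> = knot h i + h * (1 + \<xi>) / 2"

definition elem_deriv :: "real \<Rightarrow> int \<Rightarrow> (real \<Rightarrow> real) \<Rightarrow> real \<Rightarrow> real" where
  "elem_deriv h i w x = vector_derivative w (at x within {knot h i .. knot h (i + 1)})"

definition a_h :: "nat \<Rightarrow> real \<Rightarrow> (real \<Rightarrow> real) \<Rightarrow> (real \<Rightarrow> real) \<Rightarrow> real" where
  "a_h p h w v = (\<Sum>\<^sub>\<infinity> i :: int.
     sum_list (map (\<lambda>(\<xi>, wt). (h * wt / 2)
        * elem_deriv h i w (elem_node h i \<xi>) * elem_deriv h i v (elem_node h i \<xi>))
        (blended_rule p)))"

definition b_h :: "nat \<Rightarrow> real \<Rightarrow> (real \<Rightarrow> real) \<Rightarrow> (real \<Rightarrow> real) \<Rightarrow> real" where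
  "b_h p h w v = (\<Sum>\<^sub>\<infinity> i :: int.
     sum_list (map (\<lambda>(\<xi>, wt). (h * wt / 2)
        * w (elem_node h i \<xi>) * v (elem_node h i \<xi>))
        (blended_rule p)))"

section \<open>Stencil coefficients (computed at h = 1, j = 0; they are independent of h and j)\<close>

definition stiffA :: "nat \<Rightarrow> int \<Rightarrow> real" where
  "stiffA p k = 1 * a_h p 1 (bspline 1 p k) (bspline 1 p 0)"

definition massB :: "nat \<Rightarrow> int \<Rightarrow> real" where
  "massB p k = (1 / 1) * b_h p 1 (bspline 1 p k) (bspline 1 p 0)"

definition calA :: "nat \<Rightarrow> real \<Rightarrow> real" where
  "calA p \<Lambda> = stiffA p 0 + 2 * (\<Sum>k = 1..p. stiffA p (int k) * cos (real k * \<Lambda>))"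

definition calB :: "nat \<Rightarrow> real \<Rightarrow> real" where
  "calB p \<Lambda> = massB p 0 + 2 * (\<Sum>k = 1..p. massB p (int k) * cos (real k * \<Lambda>))"

definition Cconst :: "nat \<Rightarrow> real" where
  "Cconst p = 2 * (- 1) ^ p * (\<Sum>k = 1..p.
      real k ^ (2 * p + 4) / fact (2 * p + 4) * stiffA p (int k)
    + real k ^ (2 * p + 2) / fact (2 * p + 2) * massB p (int k))"

end

theory Submission imports Defs "HOL-Computational_Algebra.Polynomial" "HOL-Real_Asymp.Real_Asymp" begin

fun Np :: "nat \<Rightarrow> int \<Rightarrow> real poly" where
  "Np 0 r = (if r = 0 then 1 else 0)"
| "Np (Suc q) r = smult (1 / real (Suc q))
     ([:of_int r, 1:] * Np q r + [:real q + 2 - of_int r, -1:] * Np q (r - 1))"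

lemma bspline_piece:
  assumes "real_of_int i \<le> x" "x < real_of_int i + 1"
  shows "bspline 1 q j x = poly (Np q (i - j)) (x - real_of_int i)"
  using assms
proof (induction q arbitrary: j)
  case 0
  have "(real_of_int j \<le> x \<and> x < real_of_int j + 1) \<longleftrightarrow> i = j"
  proof
    assume h: "real_of_int j \<le> x \<and> x < real_of_int j + 1"
    have "real_of_int j < real_of_int i + 1" "real_of_int i < real_of_int j + 1" using h 0 by linarith+
    then have "j < i + 1" "i < j + 1" by linarith+
    then show "i = j" by linarith
  qed (use 0 in auto)
  then show ?case by (auto simp: knot_def)
next
  case (Suc q)
  have k1: "knot 1 (j + int (Suc q)) - knot 1 j = real (Suc q)" by (simp add: knot_def)
  have k2: "knot 1 (j + int (Suc q) + 1) - knot 1 (j + 1) = real (Suc q)" by (simp add: knot_def)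
  have IH1: "bspline 1 q j x = poly (Np q (i - j)) (x - real_of_int i)" using Suc by blast
  have IH2: "bspline 1 q (j+1) x = poly (Np q (i - j - 1)) (x - real_of_int i)"
    using Suc.IH[of "j+1"] Suc.prems by (simp add: algebra_simps)
  have e: "i - j - 1 = i - j - 1" by simp
  show ?case
    apply (simp only: bspline.simps k1 k2 IH1 IH2 Np.simps poly_smult poly_add poly_mult poly_pCons poly_0)
    apply (simp add: knot_def divide_simps)
    done
qed

lemma Np_out: "r < 0 \<or> int q < r \<Longrightarrow> Np q r = 0"
  by (induction q arbitrary: r) auto

lemma Np_cont: "poly (Np (Suc q) r) 1 = poly (Np (Suc q) (r + 1)) 0"
proof (induction q arbitrary: r)
  case 0
  show ?case by (simp add: algebra_simps)
next
  case (Suc q)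
  have h1: "poly (Np (Suc q) r) 1 = poly (Np (Suc q) (r + 1)) 0" by (rule Suc.IH)
  have h2: "poly (Np (Suc q) (r - 1)) 1 = poly (Np (Suc q) r) 0" using Suc.IH[of "r - 1"] by simp
  show ?case
    apply (simp only: Np.simps(2)[of "Suc q"] poly_smult poly_add poly_mult poly_pCons poly_0 h1 h2)
    apply (simp add: algebra_simps)
    done
qed

lemma bspline_closed:
  assumes "1 \<le> q" "0 \<le> t" "t \<le> 1"
  shows "bspline 1 q j (real_of_int i + t) = poly (Np q (i - j)) t"
proof (cases "t < 1")
  case True
  then show ?thesis using bspline_piece[of i "real_of_int i + t" q j] assms by simp
next
  case False
  then have t: "t = 1" using assms by simp
  obtain q' where q: "q = Suc q'" using assms by (cases q) auto
  have "bspline 1 q j (real_of_int (i + 1) + 0) = poly (Np q (i + 1 - j)) 0"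
    using bspline_piece[of "i+1" "real_of_int (i + 1) + 0" q j] by simp
  moreover have "poly (Np q (i - j)) 1 = poly (Np q (i - j + 1)) 0" unfolding q by (rule Np_cont)
  ultimately show ?thesis using t by (simp add: algebra_simps)
qed

lemma deriv_piece:
  assumes "1 \<le> q" "0 \<le> t" "t \<le> 1"
  shows "elem_deriv 1 i (bspline 1 q j) (real_of_int i + t) = poly (pderiv (Np q (i - j))) t"
proof -
  define P where "P = Np q (i - j)"
  define S where "S = {real_of_int i .. real_of_int i + 1}"
  have S: "{knot 1 i .. knot 1 (i + 1)} = S" by (simp add: S_def knot_def)
  have x: "real_of_int i + t \<in> S" using assms by (simp add: S_def)
  have "((\<lambda>y. poly P (y - real_of_int i)) has_real_derivative poly (pderiv P) (real_of_int i + t - real_of_int i) * 1) (at (real_of_int i + t))"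
  proof (rule DERIV_chain2[where f="poly P" and g="\<lambda>y. y - real_of_int i"])
    show "DERIV (poly P) (real_of_int i + t - real_of_int i) :> poly (pderiv P) (real_of_int i + t - real_of_int i)"
      by (rule poly_DERIV)
    show "DERIV (\<lambda>y. y - real_of_int i) (real_of_int i + t) :> 1"
      using DERIV_diff[OF DERIV_ident DERIV_const[of "real_of_int i"]] by simp
  qed
  then have "((\<lambda>y. poly P (y - real_of_int i)) has_vector_derivative poly (pderiv P) t) (at (real_of_int i + t) within S)"
    by (simp add: has_real_derivative_iff_has_vector_derivative has_vector_derivative_at_within)
  then have "(bspline 1 q j has_vector_derivative poly (pderiv P) t) (at (real_of_int i + t) within S)"
  proof (rule has_vector_derivative_weaken[OF _ x order_refl])
    fix y assume "y \<in> S"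
    then have "0 \<le> y - real_of_int i" "y - real_of_int i \<le> 1" by (auto simp: S_def)
    note bc = bspline_closed[OF assms(1) this, of j i]
    have e: "real_of_int i + (y - real_of_int i) = y" by simp
    show "poly P (y - real_of_int i) = bspline 1 q j y" using bc unfolding e P_def by (rule sym)
  qed
  then have "vector_derivative (bspline 1 q j) (at (real_of_int i + t) within S) = poly (pderiv P) t"
    using vector_derivative_within_closed_interval[of "real_of_int i" "real_of_int i + 1" "real_of_int i + t" "bspline 1 q j" "poly (pderiv P) t"] x
    unfolding S_def by simp
  then show ?thesis by (simp add: elem_deriv_def S P_def)
qed

definition QE :: "(real \<times> real) list \<Rightarrow> real poly \<Rightarrow> real" where
  "QE R P = sum_list (map (\<lambda>(\<xi>, w). w / 2 * poly P ((1 + \<xi>) / 2)) R)"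

definition goodR :: "(real \<times> real) list \<Rightarrow> bool" where
  "goodR R \<longleftrightarrow> (\<forall>z\<in>set R. -1 \<le> fst z \<and> fst z \<le> 1)"

lemma node_eq: "elem_node 1 i \<xi> = real_of_int i + (1 + \<xi>) / 2"
  by (simp add: elem_node_def knot_def)

lemma elem_stiff:
  assumes "1 \<le> q" "goodR R"
  shows "sum_list (map (\<lambda>(\<xi>, wt). 1 * wt / 2 * elem_deriv 1 i (bspline 1 q k) (elem_node 1 i \<xi>)
            * elem_deriv 1 i (bspline 1 q 0) (elem_node 1 i \<xi>)) R)
         = QE R (pderiv (Np q (i - k)) * pderiv (Np q i))"
  unfolding QE_def
proof (rule arg_cong[where f = sum_list], rule map_cong[OF refl])
  fix z assume z: "z \<in> set R"
  obtain \<xi> wt where zz: "z = (\<xi>, wt)" by (cases z)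
  have "-1 \<le> \<xi>" "\<xi> \<le> 1" using assms(2) z zz by (auto simp: goodR_def)
  then have t: "0 \<le> (1 + \<xi>) / 2" "(1 + \<xi>) / 2 \<le> 1" by auto
  show "(case z of (\<xi>, wt) \<Rightarrow> 1 * wt / 2 * elem_deriv 1 i (bspline 1 q k) (elem_node 1 i \<xi>)
            * elem_deriv 1 i (bspline 1 q 0) (elem_node 1 i \<xi>))
      = (case z of (\<xi>, w) \<Rightarrow> w / 2 * poly (pderiv (Np q (i - k)) * pderiv (Np q i)) ((1 + \<xi>) / 2))"
    using deriv_piece[OF assms(1) t, of i k] deriv_piece[OF assms(1) t, of i 0]
    by (simp add: zz node_eq)
qed

lemma elem_mass:
  assumes "1 \<le> q" "goodR R"
  shows "sum_list (map (\<lambda>(\<xi>, wt). 1 * wt / 2 * bspline 1 q k (elem_node 1 i \<xi>)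
            * bspline 1 q 0 (elem_node 1 i \<xi>)) R)
         = QE R (Np q (i - k) * Np q i)"
  unfolding QE_def
proof (rule arg_cong[where f = sum_list], rule map_cong[OF refl])
  fix z assume z: "z \<in> set R"
  obtain \<xi> wt where zz: "z = (\<xi>, wt)" by (cases z)
  have "-1 \<le> \<xi>" "\<xi> \<le> 1" using assms(2) z zz by (auto simp: goodR_def)
  then have t: "0 \<le> (1 + \<xi>) / 2" "(1 + \<xi>) / 2 \<le> 1" by auto
  show "(case z of (\<xi>, wt) \<Rightarrow> 1 * wt / 2 * bspline 1 q k (elem_node 1 i \<xi>)
            * bspline 1 q 0 (elem_node 1 i \<xi>))
      = (case z of (\<xi>, w) \<Rightarrow> w / 2 * poly (Np q (i - k) * Np q i) ((1 + \<xi>) / 2))"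
    using bspline_closed[OF assms(1) t, of k i] bspline_closed[OF assms(1) t, of 0 i]
    by (simp add: zz node_eq)
qed

lemma QE_0 [simp]: "QE R 0 = 0"
  by (induction R) (auto simp: QE_def)

lemma stiff_formula:
  assumes "1 \<le> q" "goodR (blended_rule q)"
  shows "stiffA q k = (\<Sum>i<Suc q. QE (blended_rule q) (pderiv (Np q (int i - k)) * pderiv (Np q (int i))))"
proof -
  let ?f = "\<lambda>i::int. QE (blended_rule q) (pderiv (Np q (i - k)) * pderiv (Np q i))"
  have "stiffA q k = (\<Sum>\<^sub>\<infinity> i::int. ?f i)"
    unfolding stiffA_def a_h_def using elem_stiff[OF assms] by simp
  also have "\<dots> = (\<Sum>\<^sub>\<infinity> i\<in>{0..int q}. ?f i)"
  proof (rule infsum_cong_neutral)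
    fix x :: int assume "x \<in> UNIV - {0..int q}"
    then have "x < 0 \<or> int q < x" by auto
    then show "?f x = 0" by (simp add: Np_out)
  qed auto
  also have "\<dots> = (\<Sum>i\<in>{0..int q}. ?f i)" by simp
  also have "\<dots> = (\<Sum>i<Suc q. ?f (int i))"
  proof -
    have "(\<Sum>i\<in>{0..int q}. ?f i) = (\<Sum>i\<in>int ` {0..q}. ?f i)" by (simp add: image_int_atLeastAtMost)
    also have "\<dots> = (\<Sum>i\<in>{0..q}. ?f (int i))" by (simp add: sum.reindex)
    also have "\<dots> = (\<Sum>i<Suc q. ?f (int i))" by (simp add: atLeast0AtMost lessThan_Suc_atMost)
    finally show ?thesis .
  qed
  finally show ?thesis .
qed

lemma mass_formula:
  assumes "1 \<le> q" "goodR (blended_rule q)"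
  shows "massB q k = (\<Sum>i<Suc q. QE (blended_rule q) (Np q (int i - k) * Np q (int i)))"
proof -
  let ?f = "\<lambda>i::int. QE (blended_rule q) (Np q (i - k) * Np q i)"
  have "massB q k = (\<Sum>\<^sub>\<infinity> i::int. ?f i)"
    unfolding massB_def b_h_def using elem_mass[OF assms] by simp
  also have "\<dots> = (\<Sum>\<^sub>\<infinity> i\<in>{0..int q}. ?f i)"
  proof (rule infsum_cong_neutral)
    fix x :: int assume "x \<in> UNIV - {0..int q}"
    then have "x < 0 \<or> int q < x" by auto
    then show "?f x = 0" by (simp add: Np_out)
  qed auto
  also have "\<dots> = (\<Sum>i\<in>{0..int q}. ?f i)" by simp
  also have "\<dots> = (\<Sum>i<Suc q. ?f (int i))"
  proof -
    have "(\<Sum>i\<in>{0..int q}. ?f i) = (\<Sum>i\<in>int ` {0..q}. ?f i)" by (simp add: image_int_atLeastAtMost)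
    also have "\<dots> = (\<Sum>i\<in>{0..q}. ?f (int i))" by (simp add: sum.reindex)
    also have "\<dots> = (\<Sum>i<Suc q. ?f (int i))" by (simp add: atLeast0AtMost lessThan_Suc_atMost)
    finally show ?thesis .
  qed
  finally show ?thesis .
qed

definition MU :: "(real \<times> real) list \<Rightarrow> nat \<Rightarrow> real" where
  "MU R j = sum_list (map (\<lambda>(\<xi>, w). w * \<xi> ^ j) R)"

lemma sqrt_sq_abs: "sqrt y ^ 2 = \<bar>y\<bar>"
  by (simp add: power2_eq_square)
lemma sqrt_pow_Bit0: "sqrt y ^ numeral (Num.Bit0 k) = \<bar>y\<bar> ^ numeral k"
proof -
  have "sqrt y ^ numeral (Num.Bit0 k) = sqrt y ^ numeral k * sqrt y ^ numeral k"
    by (simp only: power_numeral_even Let_def)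
  also have "\<dots> = (sqrt y * sqrt y) ^ numeral k"
    by (rule power_mult_distrib[symmetric])
  finally show ?thesis by simp
qed
lemma sqrt_pow_Bit1: "sqrt y ^ numeral (Num.Bit1 k) = sqrt y * \<bar>y\<bar> ^ numeral k"
proof -
  have "sqrt y ^ numeral (Num.Bit1 k) = sqrt y * (sqrt y ^ numeral k * sqrt y ^ numeral k)"
    by (simp only: power_numeral_odd Let_def mult.assoc)
  also have "sqrt y ^ numeral k * sqrt y ^ numeral k = (sqrt y * sqrt y) ^ numeral k"
    by (rule power_mult_distrib[symmetric])
  finally show ?thesis by simp
qed
lemma sqrt70: "sqrt 70 = 7 * sqrt (10/7)"
proof -
  have "sqrt (49 * (10/7)) = sqrt 49 * sqrt (10/7::real)" by (rule real_sqrt_mult)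
  moreover have "sqrt 49 = (7::real)" using real_sqrt_abs[of 7] by simp
  ultimately show ?thesis by simp
qed
lemma sqrt30: "sqrt 30 = 5 * sqrt (6/5)"
proof -
  have "sqrt (25 * (6/5)) = sqrt 25 * sqrt (6/5::real)" by (rule real_sqrt_mult)
  moreover have "sqrt 25 = (5::real)" using real_sqrt_abs[of 5] by simp
  ultimately show ?thesis by simp
qed
lemma sq_bounds: "0 \<le> sqrt (10/7::real)" "sqrt (10/7::real) \<le> 2" "0 \<le> sqrt (6/5::real)" "sqrt (6/5::real) \<le> 3/2"
proof -
  have "sqrt (10/7) \<le> sqrt (4::real)" by (rule real_sqrt_le_mono) simp
  moreover have "sqrt (4::real) = 2" using real_sqrt_abs[of 2] by simp
  ultimately show "sqrt (10/7::real) \<le> 2" by simp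
  have "sqrt (6/5) \<le> sqrt ((3/2)^2::real)" by (rule real_sqrt_le_mono) (simp add: power2_eq_square)
  then show "sqrt (6/5::real) \<le> 3/2" by (simp only: real_sqrt_abs; simp)
qed simp_all

lemma abs5: "\<bar>5 + 2 * sqrt (10/7)\<bar> = 5 + 2 * sqrt (10/7::real)" "\<bar>5 - 2 * sqrt (10/7)\<bar> = 5 - 2 * sqrt (10/7::real)"
proof -
  have "0 \<le> 5 + 2 * sqrt (10/7::real)" "0 \<le> 5 - 2 * sqrt (10/7::real)" using sq_bounds by linarith+
  then show "\<bar>5 + 2 * sqrt (10/7)\<bar> = 5 + 2 * sqrt (10/7::real)" "\<bar>5 - 2 * sqrt (10/7)\<bar> = 5 - 2 * sqrt (10/7::real)"
    by (simp only: abs_of_nonneg)+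
qed
lemma abs37: "\<bar>3/7 + 2/7 * sqrt (6/5)\<bar> = 3/7 + 2/7 * sqrt (6/5::real)" "\<bar>3/7 - 2/7 * sqrt (6/5)\<bar> = 3/7 - 2/7 * sqrt (6/5::real)"
  "\<bar>3/7 - 2 * sqrt (6/5) / 7\<bar> = 3/7 - 2 * sqrt (6/5) / (7::real)"
proof -
  have "0 \<le> 3/7 + 2/7 * sqrt (6/5::real)" "0 \<le> 3/7 - 2/7 * sqrt (6/5::real)" "0 \<le> 3/7 - 2 * sqrt (6/5) / (7::real)"
    using sq_bounds by linarith+
  then show "\<bar>3/7 + 2/7 * sqrt (6/5)\<bar> = 3/7 + 2/7 * sqrt (6/5::real)" "\<bar>3/7 - 2/7 * sqrt (6/5)\<bar> = 3/7 - 2/7 * sqrt (6/5::real)"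
     "\<bar>3/7 - 2 * sqrt (6/5) / 7\<bar> = 3/7 - 2 * sqrt (6/5) / (7::real)"
    by (simp only: abs_of_nonneg)+
qed
lemma sqrt_ml: "sqrt a * (sqrt a * x) = \<bar>a\<bar> * x"
  by (simp add: mult.assoc[symmetric])
lemmas MUsimps = MU_def gauss_rule_def lobatto_rule_def sqrt_pow_Bit0 sqrt_pow_Bit1 power_minus_Bit0 power_minus_Bit1
  power_mult_distrib sqrt70 sqrt30 abs5 abs37 power_divide
lemmas MUsimps2 = power_numeral_reduce algebra_simps sqrt_ml



lemma MU_g2_0: "MU (gauss_rule 2) 0 = (2)"
  by (simp add: MUsimps; simp add: MUsimps2; simp add: field_simps)
lemma MU_l2_0: "MU (lobatto_rule 2) 0 = (2)"
  by (simp add: MUsimps; simp add: MUsimps2; simp add: field_simps)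
lemma MU_g2_1: "MU (gauss_rule 2) 1 = (0)"
  by (simp add: MUsimps; simp add: MUsimps2; simp add: field_simps)
lemma MU_l2_1: "MU (lobatto_rule 2) 1 = (0)"
  by (simp add: MUsimps; simp add: MUsimps2; simp add: field_simps)
lemma MU_g2_2: "MU (gauss_rule 2) 2 = (2/3)"
  by (simp add: MUsimps; simp add: MUsimps2; simp add: field_simps)
lemma MU_l2_2: "MU (lobatto_rule 2) 2 = (2)"
  by (simp add: MUsimps; simp add: MUsimps2; simp add: field_simps)
lemma MU_g3_0: "MU (gauss_rule 3) 0 = (2)"
  by (simp add: MUsimps; simp add: MUsimps2; simp add: field_simps)
lemma MU_l3_0: "MU (lobatto_rule 3) 0 = (2)"
  by (simp add: MUsimps; simp add: MUsimps2; simp add: field_simps)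
lemma MU_g3_1: "MU (gauss_rule 3) 1 = (0)"
  by (simp add: MUsimps; simp add: MUsimps2; simp add: field_simps)
lemma MU_l3_1: "MU (lobatto_rule 3) 1 = (0)"
  by (simp add: MUsimps; simp add: MUsimps2; simp add: field_simps)
lemma MU_g3_2: "MU (gauss_rule 3) 2 = (2/3)"
  by (simp add: MUsimps; simp add: MUsimps2; simp add: field_simps)
lemma MU_l3_2: "MU (lobatto_rule 3) 2 = (2/3)"
  by (simp add: MUsimps; simp add: MUsimps2; simp add: field_simps)
lemma MU_g3_3: "MU (gauss_rule 3) 3 = (0)"
  by (simp add: MUsimps; simp add: MUsimps2; simp add: field_simps)
lemma MU_l3_3: "MU (lobatto_rule 3) 3 = (0)"
  by (simp add: MUsimps; simp add: MUsimps2; simp add: field_simps)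
lemma MU_g3_4: "MU (gauss_rule 3) 4 = (2/5)"
  by (simp add: MUsimps; simp add: MUsimps2; simp add: field_simps)
lemma MU_l3_4: "MU (lobatto_rule 3) 4 = (2/3)"
  by (simp add: MUsimps; simp add: MUsimps2; simp add: field_simps)
lemma MU_g4_0: "MU (gauss_rule 4) 0 = (2)"
  by (simp add: MUsimps; simp add: field_simps)
lemma MU_l4_0: "MU (lobatto_rule 4) 0 = (2)"
  by (simp add: MUsimps; simp add: MUsimps2; simp add: field_simps)
lemma MU_g4_1: "MU (gauss_rule 4) 1 = (0)"
  by (simp add: MUsimps; simp add: MUsimps2; simp add: field_simps)
lemma MU_l4_1: "MU (lobatto_rule 4) 1 = (0)"
  by (simp add: MUsimps; simp add: MUsimps2; simp add: field_simps)
lemma MU_g4_2: "MU (gauss_rule 4) 2 = (2/3)"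
  by (simp add: MUsimps; simp add: MUsimps2; simp add: field_simps)
lemma MU_l4_2: "MU (lobatto_rule 4) 2 = (2/3)"
  by (simp add: MUsimps; simp add: MUsimps2; simp add: field_simps)
lemma MU_g4_3: "MU (gauss_rule 4) 3 = (0)"
  by (simp add: MUsimps; simp add: MUsimps2; simp add: field_simps)
lemma MU_l4_3: "MU (lobatto_rule 4) 3 = (0)"
  by (simp add: MUsimps; simp add: MUsimps2; simp add: field_simps)
lemma MU_g4_4: "MU (gauss_rule 4) 4 = (2/5)"
  by (simp add: MUsimps; simp add: MUsimps2; simp add: field_simps)
lemma MU_l4_4: "MU (lobatto_rule 4) 4 = (2/5)"
  by (simp add: MUsimps; simp add: MUsimps2; simp add: field_simps)
lemma MU_g4_5: "MU (gauss_rule 4) 5 = (0)"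
  by (simp add: MUsimps; simp add: MUsimps2; simp add: field_simps)
lemma MU_l4_5: "MU (lobatto_rule 4) 5 = (0)"
  by (simp add: MUsimps; simp add: MUsimps2; simp add: field_simps)
lemma MU_g4_6: "MU (gauss_rule 4) 6 = (2/7)"
  by (simp add: MUsimps; simp add: MUsimps2; simp add: field_simps)
lemma MU_l4_6: "MU (lobatto_rule 4) 6 = (26/75)"
  by (simp add: MUsimps; simp add: MUsimps2; simp add: field_simps)
lemma MU_g5_0: "MU (gauss_rule 5) 0 = (2)"
  by (simp add: MUsimps; simp add: MUsimps2; simp add: field_simps)
lemma MU_l5_0: "MU (lobatto_rule 5) 0 = (2)"
  by (simp add: MUsimps; simp add: MUsimps2; simp add: field_simps)
lemma MU_g5_1: "MU (gauss_rule 5) 1 = (0)"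
  by (simp add: MUsimps; simp add: MUsimps2; simp add: field_simps)
lemma MU_l5_1: "MU (lobatto_rule 5) 1 = (0)"
  by (simp add: MUsimps; simp add: MUsimps2; simp add: field_simps)
lemma MU_g5_2: "MU (gauss_rule 5) 2 = (2/3)"
  by (simp add: MUsimps; simp add: MUsimps2; simp add: field_simps)
lemma MU_l5_2: "MU (lobatto_rule 5) 2 = (2/3)"
  by (simp add: MUsimps; simp add: MUsimps2; simp add: field_simps)
lemma MU_g5_3: "MU (gauss_rule 5) 3 = (0)"
  by (simp add: MUsimps; simp add: MUsimps2; simp add: field_simps)
lemma MU_l5_3: "MU (lobatto_rule 5) 3 = (0)"
  by (simp add: MUsimps; simp add: MUsimps2; simp add: field_simps)
lemma MU_g5_4: "MU (gauss_rule 5) 4 = (2/5)"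
  by (simp add: MUsimps; simp add: MUsimps2; simp add: field_simps)
lemma MU_l5_4: "MU (lobatto_rule 5) 4 = (2/5)"
  by (simp add: MUsimps; simp add: MUsimps2; simp add: field_simps)
lemma MU_g5_5: "MU (gauss_rule 5) 5 = (0)"
  by (simp add: MUsimps; simp add: MUsimps2; simp add: field_simps)
lemma MU_l5_5: "MU (lobatto_rule 5) 5 = (0)"
  by (simp add: MUsimps; simp add: MUsimps2; simp add: field_simps)
lemma MU_g5_6: "MU (gauss_rule 5) 6 = (2/7)"
  by (simp add: MUsimps; simp add: MUsimps2; simp add: field_simps)
lemma MU_l5_6: "MU (lobatto_rule 5) 6 = (2/7)"
  by (simp add: MUsimps; simp add: MUsimps2; simp add: field_simps)
lemma MU_g5_7: "MU (gauss_rule 5) 7 = (0)"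
  by (simp add: MUsimps; simp add: MUsimps2; simp add: field_simps)
lemma MU_l5_7: "MU (lobatto_rule 5) 7 = (0)"
  by (simp add: MUsimps; simp add: MUsimps2; simp add: field_simps)
lemma MU_g5_8: "MU (gauss_rule 5) 8 = (2/9)"
  by (simp add: MUsimps; simp add: MUsimps2; simp add: field_simps)
lemma MU_l5_8: "MU (lobatto_rule 5) 8 = (58/245)"
  by (simp add: MUsimps; simp add: MUsimps2; simp add: field_simps)
lemma MU_g2_1s: "MU (gauss_rule 2) (Suc 0) = 0"
  using MU_g2_1 by simp
lemma MU_l2_1s: "MU (lobatto_rule 2) (Suc 0) = 0"
  using MU_l2_1 by simp
lemma MU_g3_1s: "MU (gauss_rule 3) (Suc 0) = 0"
  using MU_g3_1 by simp
lemma MU_l3_1s: "MU (lobatto_rule 3) (Suc 0) = 0"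
  using MU_l3_1 by simp
lemma MU_g4_1s: "MU (gauss_rule 4) (Suc 0) = 0"
  using MU_g4_1 by simp
lemma MU_l4_1s: "MU (lobatto_rule 4) (Suc 0) = 0"
  using MU_l4_1 by simp
lemma MU_g5_1s: "MU (gauss_rule 5) (Suc 0) = 0"
  using MU_g5_1 by simp
lemma MU_l5_1s: "MU (lobatto_rule 5) (Suc 0) = 0"
  using MU_l5_1 by simp
lemmas MU_vals = MU_g2_1s MU_l2_1s MU_g3_1s MU_l3_1s MU_g4_1s MU_l4_1s MU_g5_1s MU_l5_1s MU_g2_0 MU_l2_0 MU_g2_1 MU_l2_1 MU_g2_2 MU_l2_2 MU_g3_0 MU_l3_0 MU_g3_1 MU_l3_1 MU_g3_2 MU_l3_2 MU_g3_3 MU_l3_3 MU_g3_4 MU_l3_4 MU_g4_0 MU_l4_0 MU_g4_1 MU_l4_1 MU_g4_2 MU_l4_2 MU_g4_3 MU_l4_3 MU_g4_4 MU_l4_4 MU_g4_5 MU_l4_5 MU_g4_6 MU_l4_6 MU_g5_0 MU_l5_0 MU_g5_1 MU_l5_1 MU_g5_2 MU_l5_2 MU_g5_3 MU_l5_3 MU_g5_4 MU_l5_4 MU_g5_5 MU_l5_5 MU_g5_6 MU_l5_6 MU_g5_7 MU_l5_7 MU_g5_8 MU_l5_8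


lemma sum_list_scale: "sum_list (map (\<lambda>(\<xi>, w). w * \<xi> ^ j) (map (\<lambda>(\<xi>, w). (\<xi>, c * w)) L))
   = (c::real) * sum_list (map (\<lambda>(\<xi>::real, w::real). w * \<xi> ^ j) L)"
  by (induction L) (auto simp: algebra_simps)

lemma MU_blended: "MU (blended_rule p) m = blend_tau p * MU (gauss_rule (p + 1)) m + (1 - blend_tau p) * MU (lobatto_rule (p + 1)) m"
  unfolding MU_def blended_rule_def by (simp only: sum_list_append map_append sum_list_scale)

definition LM :: "(real \<times> real) list \<Rightarrow> nat \<Rightarrow> real poly \<Rightarrow> real" where
  "LM R m P = sum_list (map (\<lambda>(\<xi>, w). w / 2 * \<xi> ^ m * poly P \<xi>) R)"

lemma LM_0: "LM R m 0 = 0"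
  unfolding LM_def by (induction R) auto

lemma LM_pCons: "LM R m (pCons a P) = a * MU R m / 2 + LM R (m + 1) P"
proof -
  have e: "(\<lambda>(\<xi>, w). w / 2 * \<xi> ^ m * poly (pCons a P) \<xi>)
     = (\<lambda>z. a / 2 * (case z of (\<xi>, w) \<Rightarrow> w * \<xi> ^ m) + (case z of (\<xi>, w) \<Rightarrow> w / 2 * \<xi> ^ (m + 1) * poly P \<xi>))"
    by (simp add: case_prod_unfold fun_eq_iff algebra_simps)
  show ?thesis unfolding LM_def MU_def e by (simp only: sum_list_addf sum_list_const_mult)
qed

lemma QE_LM: "QE R P = LM R 0 (P \<circ>\<^sub>p [:1/2, 1/2:])"
  unfolding QE_def LM_def by (simp add: poly_pcompose add_divide_distrib)

lemma LM_1: "LM R m 1 = MU R m / 2"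
  unfolding LM_def MU_def by (induction R) (auto simp: algebra_simps)
lemma LM_add: "LM R m (P + Q) = LM R m P + LM R m Q"
  unfolding LM_def by (induction R) (auto simp: algebra_simps)
lemma LM_uminus: "LM R m (- P) = - LM R m P"
  unfolding LM_def by (induction R) (auto simp: algebra_simps)
lemma LM_diff: "LM R m (P - Q) = LM R m P - LM R m Q"
  using LM_add[of R m P "-Q"] LM_uminus[of R m Q] by simp
lemma LM_smult: "LM R m (smult c P) = c * LM R m P"
  unfolding LM_def by (induction R) (auto simp: algebra_simps)
lemma Np_numeral: "Np (numeral n) r = Np (Suc (pred_numeral n)) r"
  by (simp add: numeral_eq_Suc)
lemma Np_1: "Np 1 r = Np (Suc 0) r"
  by simp

lemma node_bounds: "sqrt (5 + 2 * sqrt (10/7)) \<le> 3" "sqrt (5 - 2 * sqrt (10/7)) \<le> 3"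
  "sqrt (3/7 + 2/7 * sqrt (6/5)) \<le> 1" "sqrt (3/7 - 2/7 * sqrt (6/5)) \<le> 1"
  "1 / sqrt 3 \<le> 1" "1 / sqrt 5 \<le> 1"
proof -
  have s9: "sqrt (9::real) = 3" using real_sqrt_abs[of 3] by simp
  show "sqrt (5 + 2 * sqrt (10/7)) \<le> 3" unfolding s9[symmetric] by (rule real_sqrt_le_mono) (use sq_bounds in linarith)
  show "sqrt (5 - 2 * sqrt (10/7)) \<le> 3" unfolding s9[symmetric] by (rule real_sqrt_le_mono) (use sq_bounds in linarith)
  show "sqrt (3/7 + 2/7 * sqrt (6/5)) \<le> 1" by (subst real_sqrt_le_1_iff) (use sq_bounds in linarith)
  show "sqrt (3/7 - 2/7 * sqrt (6/5)) \<le> 1" by (subst real_sqrt_le_1_iff) (use sq_bounds in linarith)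
  show "1 / sqrt 3 \<le> (1::real)" by simp
  show "1 / sqrt 5 \<le> (1::real)" by simp
qed

lemma node_nonneg: "0 \<le> sqrt (5 + 2 * sqrt (10/7))" "0 \<le> sqrt (5 - 2 * sqrt (10/7))"
  "0 \<le> sqrt (3/7 + 2/7 * sqrt (6/5))" "0 \<le> sqrt (3/7 - 2/7 * sqrt (6/5))"
  "0 \<le> 1 / sqrt 3" "0 \<le> 1 / sqrt 5" "0 \<le> sqrt (3/5)" "0 \<le> sqrt (3/7)"
  "sqrt (3/5) \<le> 1" "sqrt (3/7) \<le> 1"
  using abs5 abs37 by (simp_all add: abs_le_iff)

lemma node_facts: "0 \<le> 1 / sqrt (3::real)" "0 \<le> 1 / sqrt (5::real)" "0 \<le> sqrt (3/5::real)" "0 \<le> sqrt (3/7::real)"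
  "0 \<le> sqrt (3/7 + 2 * sqrt (6/5) / (7::real))" "0 \<le> sqrt (3/7 - 2 * sqrt (6/5) / (7::real))"
  "0 \<le> sqrt (5 + 2 * sqrt (10/(7::real)))" "0 \<le> sqrt (5 - 2 * sqrt (10/(7::real)))"
  "sqrt (3/7 + 2 * sqrt (6/5) / (7::real)) \<le> 1" "sqrt (3/7 - 2 * sqrt (6/5) / (7::real)) \<le> 1"
  "1 / sqrt (3::real) \<le> 1" "1 / sqrt (5::real) \<le> 1" "sqrt (3/5::real) \<le> 1" "sqrt (3/7::real) \<le> 1"
proof -
  have "0 \<le> 3/7 - 2* sqrt(6/5)/(7::real)" "3/7 + 2* sqrt(6/5)/7 \<le> (1::real)" "0 \<le> 5 - 2* sqrt(10/(7::real))"
    "3/7 - 2* sqrt(6/5)/7 \<le> (1::real)" "0 \<le> 3/7 + 2* sqrt(6/5)/(7::real)" "0 \<le> 5 + 2* sqrt(10/(7::real))"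
    using sq_bounds by linarith+
  then show "0 \<le> 1 / sqrt (3::real)" "0 \<le> 1 / sqrt (5::real)" "0 \<le> sqrt (3/5::real)" "0 \<le> sqrt (3/7::real)"
  "0 \<le> sqrt (3/7 + 2 * sqrt (6/5) / (7::real))" "0 \<le> sqrt (3/7 - 2 * sqrt (6/5) / (7::real))"
  "0 \<le> sqrt (5 + 2 * sqrt (10/(7::real)))" "0 \<le> sqrt (5 - 2 * sqrt (10/(7::real)))"
  "sqrt (3/7 + 2 * sqrt (6/5) / (7::real)) \<le> 1" "sqrt (3/7 - 2 * sqrt (6/5) / (7::real)) \<le> 1"
  "1 / sqrt (3::real) \<le> 1" "1 / sqrt (5::real) \<le> 1" "sqrt (3/5::real) \<le> 1" "sqrt (3/7::real) \<le> 1"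
    using sq_bounds apply simp_all
    apply (use sq_bounds in linarith)+
    done
qed

lemma good_blended: "p \<in> {1,2,3,4} \<Longrightarrow> goodR (blended_rule p)"
  apply (auto simp: goodR_def blended_rule_def gauss_rule_def lobatto_rule_def)
  apply (use node_facts node_bounds sq_bounds in linarith)+
  done

lemma Np_1_0: "Np 1 0 = [:0, 1:]"
  by (simp add: One_nat_def)
lemma Np_1_1: "Np 1 1 = [:1, -1:]"
  by (simp add: One_nat_def)
lemma Np_2_0: "Np 2 0 = [:0, 0, 1/2:]"
  by (simp add: eval_nat_numeral)
lemma Np_2_1: "Np 2 1 = [:1/2, 1, -1:]"
  by (simp add: eval_nat_numeral)
lemma Np_2_2: "Np 2 2 = [:1/2, -1, 1/2:]"
  by (simp add: eval_nat_numeral)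
lemma Np_3_0: "Np 3 0 = [:0, 0, 0, 1/6:]"
  by (simp add: eval_nat_numeral)
lemma Np_3_1: "Np 3 1 = [:1/6, 1/2, 1/2, -1/2:]"
  by (simp add: eval_nat_numeral)
lemma Np_3_2: "Np 3 2 = [:2/3, 0, -1, 1/2:]"
  by (simp add: eval_nat_numeral)
lemma Np_3_3: "Np 3 3 = [:1/6, -1/2, 1/2, -1/6:]"
  by (simp add: eval_nat_numeral)
lemma Np_4_0: "Np 4 0 = [:0, 0, 0, 0, 1/24:]"
  by (simp add: eval_nat_numeral)
lemma Np_4_1: "Np 4 1 = [:1/24, 1/6, 1/4, 1/6, -1/6:]"
  by (simp add: eval_nat_numeral)
lemma Np_4_2: "Np 4 2 = [:11/24, 1/2, -1/4, -1/2, 1/4:]"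
  by (simp add: eval_nat_numeral)
lemma Np_4_3: "Np 4 3 = [:11/24, -1/2, -1/4, 1/2, -1/6:]"
  by (simp add: eval_nat_numeral)
lemma Np_4_4: "Np 4 4 = [:1/24, -1/6, 1/4, -1/6, 1/24:]"
  by (simp add: eval_nat_numeral)
lemmas Np_vals = Np_1_0 Np_1_1 Np_2_0 Np_2_1 Np_2_2 Np_3_0 Np_3_1 Np_3_2 Np_3_3 Np_4_0 Np_4_1 Np_4_2 Np_4_3 Np_4_4
lemma Suc_Suc_0: "Suc (Suc 0) = 2" by simp
lemmas CompSimps = QE_LM LM_0 LM_pCons LM_1 LM_add LM_uminus LM_diff LM_smult pcompose_1 pcompose_add pcompose_uminus pcompose_diff pcompose_smult pderiv_add pderiv_minus pderiv_diff pderiv_smult ring_distribs MU_blended blend_tau_def Suc_Suc_0 MU_vals Np_vals Np_out pderiv_pCons pcompose_pCons lessThan_nat_numeral lessThan_Suc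
lemma set_1_to: "{1..(1::nat)} = {1}" "{1..(2::nat)} = {1,2}" "{1..(3::nat)} = {1,2,3}" "{1..(4::nat)} = {1,2,3,4}"
  "{Suc 0..(2::nat)} = {Suc 0,2}" "{Suc 0..(3::nat)} = {Suc 0,2,3}" "{Suc 0..(4::nat)} = {Suc 0,2,3,4}"
  by auto
lemma stiff_1_0: "stiffA 1 0 = (2)"
  by (simp add: stiff_formula[OF _ good_blended] CompSimps)
lemma mass_1_0: "massB 1 0 = (5/6)"
  by (simp add: mass_formula[OF _ good_blended] CompSimps)
lemma stiff_1_1: "stiffA 1 1 = (- 1)"
  by (simp add: stiff_formula[OF _ good_blended] CompSimps)
lemma mass_1_1: "massB 1 1 = (1/12)"
  by (simp add: mass_formula[OF _ good_blended] CompSimps)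
lemma stiff_1s: "stiffA (Suc 0) 0 = 2" "stiffA (Suc 0) 1 = -1" "massB (Suc 0) 0 = 5/6" "massB (Suc 0) 1 = 1/12"
  using stiff_1_0 stiff_1_1 mass_1_0 mass_1_1 by simp_all
lemma calA_1: "calA 1 = (\<lambda>x. (2) + 2 * ((- 1) * cos x))"
  by (rule ext) (simp add: calA_def set_1_to stiff_1s stiff_1_0 mass_1_0 stiff_1_1 mass_1_1)
lemma calB_1: "calB 1 = (\<lambda>x. (5/6) + 2 * ((1/12) * cos x))"
  by (rule ext) (simp add: calB_def set_1_to stiff_1s stiff_1_0 mass_1_0 stiff_1_1 mass_1_1)
lemma Cconst_1: "Cconst 1 = (- 1/240)"
  by (simp add: Cconst_def set_1_to stiff_1s stiff_1_0 mass_1_0 stiff_1_1 mass_1_1 fact_numeral)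
lemma K_1: "(\<lambda>x. calA 1 x / (x^2 * calB 1 x) - 1 - Cconst 1 * x^(2*1+2)) \<in> O[at_right 0](\<lambda>x. x^(2*1+4))"
  unfolding calA_1 calB_1 Cconst_1 by real_asymp
lemma Bev_1: "eventually (\<lambda>x. calB 1 x \<noteq> 0) (at_right 0)"
proof -
  have "((\<lambda>x::real. (5/6) + 2 * ((1/12) * cos x)) \<longlongrightarrow> 1) (at_right 0)" by real_asymp
  from order_tendstoD(1)[OF this, of 0] show ?thesis unfolding calB_1 by (auto elim: eventually_mono)
qed

lemma stiff_2_0: "stiffA 2 0 = (1)"
  by (simp add: stiff_formula[OF _ good_blended] CompSimps)
lemma mass_2_0: "massB 2 0 = (67/120)"
  by (simp add: mass_formula[OF _ good_blended] CompSimps)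
lemma stiff_2_1: "stiffA 2 1 = (- 1/3)"
  by (simp add: stiff_formula[OF _ good_blended] CompSimps)
lemma mass_2_1: "massB 2 1 = (19/90)"
  by (simp add: mass_formula[OF _ good_blended] CompSimps)
lemma stiff_2_2: "stiffA 2 2 = (- 1/6)"
  by (simp add: stiff_formula[OF _ good_blended] CompSimps)
lemma mass_2_2: "massB 2 2 = (7/720)"
  by (simp add: mass_formula[OF _ good_blended] CompSimps)
lemma calA_2: "calA 2 = (\<lambda>x. (1) + 2 * ((- 1/3) * cos x + (- 1/6) * cos (2 * x)))"
  by (rule ext) (simp add: calA_def set_1_to stiff_2_0 mass_2_0 stiff_2_1 mass_2_1 stiff_2_2 mass_2_2)
lemma calB_2: "calB 2 = (\<lambda>x. (67/120) + 2 * ((19/90) * cos x + (7/720) * cos (2 * x)))"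
  by (rule ext) (simp add: calB_def set_1_to stiff_2_0 mass_2_0 stiff_2_1 mass_2_1 stiff_2_2 mass_2_2)
lemma Cconst_2: "Cconst 2 = (11/60480)"
  by (simp add: Cconst_def set_1_to stiff_2_0 mass_2_0 stiff_2_1 mass_2_1 stiff_2_2 mass_2_2 fact_numeral)
lemma K_2: "(\<lambda>x. calA 2 x / (x^2 * calB 2 x) - 1 - Cconst 2 * x^(2*2+2)) \<in> O[at_right 0](\<lambda>x. x^(2*2+4))"
  unfolding calA_2 calB_2 Cconst_2 by real_asymp
lemma Bev_2: "eventually (\<lambda>x. calB 2 x \<noteq> 0) (at_right 0)"
proof -
  have "((\<lambda>x::real. (67/120) + 2 * ((19/90) * cos x + (7/720) * cos (2 * x))) \<longlongrightarrow> 1) (at_right 0)" by real_asymp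
  from order_tendstoD(1)[OF this, of 0] show ?thesis unfolding calB_2 by (auto elim: eventually_mono)
qed

lemma stiff_3_0: "stiffA 3 0 = (2/3)"
  by (simp add: stiff_formula[OF _ good_blended] CompSimps)
lemma mass_3_0: "massB 3 0 = (3629/7560)"
  by (simp add: mass_formula[OF _ good_blended] CompSimps)
lemma stiff_3_1: "stiffA 3 1 = (- 1/8)"
  by (simp add: stiff_formula[OF _ good_blended] CompSimps)
lemma mass_3_1: "massB 3 1 = (2377/10080)"
  by (simp add: mass_formula[OF _ good_blended] CompSimps)
lemma stiff_3_2: "stiffA 3 2 = (- 1/5)"
  by (simp add: stiff_formula[OF _ good_blended] CompSimps)
lemma mass_3_2: "massB 3 2 = (121/5040)"
  by (simp add: mass_formula[OF _ good_blended] CompSimps)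
lemma stiff_3_3: "stiffA 3 3 = (- 1/120)"
  by (simp add: stiff_formula[OF _ good_blended] CompSimps)
lemma mass_3_3: "massB 3 3 = (1/6048)"
  by (simp add: mass_formula[OF _ good_blended] CompSimps)
lemma calA_3: "calA 3 = (\<lambda>x. (2/3) + 2 * ((- 1/8) * cos x + (- 1/5) * cos (2 * x) + (- 1/120) * cos (3 * x)))"
  by (rule ext) (simp add: calA_def set_1_to stiff_3_0 mass_3_0 stiff_3_1 mass_3_1 stiff_3_2 mass_3_2 stiff_3_3 mass_3_3)
lemma calB_3: "calB 3 = (\<lambda>x. (3629/7560) + 2 * ((2377/10080) * cos x + (121/5040) * cos (2 * x) + (1/6048) * cos (3 * x)))"
  by (rule ext) (simp add: calB_def set_1_to stiff_3_0 mass_3_0 stiff_3_1 mass_3_1 stiff_3_2 mass_3_2 stiff_3_3 mass_3_3)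
lemma Cconst_3: "Cconst 3 = (1/72576)"
  by (simp add: Cconst_def set_1_to stiff_3_0 mass_3_0 stiff_3_1 mass_3_1 stiff_3_2 mass_3_2 stiff_3_3 mass_3_3 fact_numeral)
lemma K_3: "(\<lambda>x. calA 3 x / (x^2 * calB 3 x) - 1 - Cconst 3 * x^(2*3+2)) \<in> O[at_right 0](\<lambda>x. x^(2*3+4))"
  unfolding calA_3 calB_3 Cconst_3 by real_asymp
lemma Bev_3: "eventually (\<lambda>x. calB 3 x \<noteq> 0) (at_right 0)"
proof -
  have "((\<lambda>x::real. (3629/7560) + 2 * ((2377/10080) * cos x + (121/5040) * cos (2 * x) + (1/6048) * cos (3 * x))) \<longlongrightarrow> 1) (at_right 0)" by real_asymp
  from order_tendstoD(1)[OF this, of 0] show ?thesis unfolding calB_3 by (auto elim: eventually_mono)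
qed

lemma stiff_4_0: "stiffA 4 0 = (35/72)"
  by (simp add: stiff_formula[OF _ good_blended] CompSimps)
lemma mass_4_0: "massB 4 0 = (156211/362880)"
  by (simp add: mass_formula[OF _ good_blended] CompSimps)
lemma stiff_4_1: "stiffA 4 1 = (- 11/360)"
  by (simp add: stiff_formula[OF _ good_blended] CompSimps)
lemma mass_4_1: "massB 4 1 = (220543/907200)"
  by (simp add: mass_formula[OF _ good_blended] CompSimps)
lemma stiff_4_2: "stiffA 4 2 = (- 17/90)"
  by (simp add: stiff_formula[OF _ good_blended] CompSimps)
lemma mass_4_2: "massB 4 2 = (36541/907200)"
  by (simp add: mass_formula[OF _ good_blended] CompSimps)
lemma stiff_4_3: "stiffA 4 3 = (- 59/2520)"
  by (simp add: stiff_formula[OF _ good_blended] CompSimps)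
lemma mass_4_3: "massB 4 3 = (1249/907200)"
  by (simp add: mass_formula[OF _ good_blended] CompSimps)
lemma stiff_4_4: "stiffA 4 4 = (- 1/5040)"
  by (simp add: stiff_formula[OF _ good_blended] CompSimps)
lemma mass_4_4: "massB 4 4 = (13/3628800)"
  by (simp add: mass_formula[OF _ good_blended] CompSimps)
lemma calA_4: "calA 4 = (\<lambda>x. (35/72) + 2 * ((- 11/360) * cos x + (- 17/90) * cos (2 * x) + (- 59/2520) * cos (3 * x) + (- 1/5040) * cos (4 * x)))"
  by (rule ext) (simp add: calA_def set_1_to stiff_4_0 mass_4_0 stiff_4_1 mass_4_1 stiff_4_2 mass_4_2 stiff_4_3 mass_4_3 stiff_4_4 mass_4_4)
lemma calB_4: "calB 4 = (\<lambda>x. (156211/362880) + 2 * ((220543/907200) * cos x + (36541/907200) * cos (2 * x) + (1249/907200) * cos (3 * x) + (13/3628800) * cos (4 * x)))"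
  by (rule ext) (simp add: calB_def set_1_to stiff_4_0 mass_4_0 stiff_4_1 mass_4_1 stiff_4_2 mass_4_2 stiff_4_3 mass_4_3 stiff_4_4 mass_4_4)
lemma Cconst_4: "Cconst 4 = (317/479001600)"
  by (simp add: Cconst_def set_1_to stiff_4_0 mass_4_0 stiff_4_1 mass_4_1 stiff_4_2 mass_4_2 stiff_4_3 mass_4_3 stiff_4_4 mass_4_4 fact_numeral)
lemma K_4: "(\<lambda>x. calA 4 x / (x^2 * calB 4 x) - 1 - Cconst 4 * x^(2*4+2)) \<in> O[at_right 0](\<lambda>x. x^(2*4+4))"
  unfolding calA_4 calB_4 Cconst_4 by real_asymp
lemma Bev_4: "eventually (\<lambda>x. calB 4 x \<noteq> 0) (at_right 0)"
proof -
  have "((\<lambda>x::real. (156211/362880) + 2 * ((220543/907200) * cos x + (36541/907200) * cos (2 * x) + (1249/907200) * cos (3 * x) + (13/3628800) * cos (4 * x))) \<longlongrightarrow> 1) (at_right 0)" by real_asymp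
  from order_tendstoD(1)[OF this, of 0] show ?thesis unfolding calB_4 by (auto elim: eventually_mono)
qed

lemma generic:
  fixes cA cB lam :: "real \<Rightarrow> real" and C S a0 \<kappa> :: real and M N :: nat
  assumes K: "(\<lambda>x. cA x / (x^2 * cB x) - 1 - C * x^M) \<in> O[at_right 0](\<lambda>x. x^N)"
    and B: "eventually (\<lambda>x. cB x \<noteq> 0) (at_right 0)"
    and kp: "\<kappa> > 0"
    and eq: "\<And>h. h > 0 \<Longrightarrow> S * cA (\<kappa>*h) = (lam h - a0) * cB (\<kappa>*h) * h^2"
  shows "(\<lambda>h. lam h - (a0 + \<kappa>^2*S) - C * (\<kappa>^2*S) * (\<kappa>*h)^M) \<in> O[at_right 0](\<lambda>h. h^N)"
proof -
  define g where "g x = cA x / (x^2 * cB x) - 1 - C * x^M" for x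
  have lim: "filterlim (\<lambda>h. \<kappa>*h) (at_right 0) (at_right 0)"
    using kp by real_asymp
  have K2: "(\<lambda>h. g (\<kappa>*h)) \<in> O[at_right 0](\<lambda>h. (\<kappa>*h)^N)"
    using landau_o.big.compose[OF K lim] unfolding g_def .
  have "O[at_right 0](\<lambda>h::real. (\<kappa>*h)^N) = O[at_right 0](\<lambda>h. \<kappa>^N * h^N)"
    by (simp add: power_mult_distrib)
  also have "\<dots> = O[at_right 0](\<lambda>h. h^N)" using kp by (intro landau_o.big.cmult) simp
  finally have K3: "(\<lambda>h. g (\<kappa>*h)) \<in> O[at_right 0](\<lambda>h. h^N)" using K2 by simp
  have K4: "(\<lambda>h. (\<kappa>^2*S) * g (\<kappa>*h)) \<in> O[at_right 0](\<lambda>h. h^N)"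
  proof (cases "\<kappa>^2*S = 0")
    case True then show ?thesis by simp
  next
    case False then show ?thesis using K3 by simp
  qed
  have ev1: "eventually (\<lambda>h. cB (\<kappa>*h) \<noteq> 0) (at_right 0)"
    using eventually_compose_filterlim[OF B lim] .
  have ev: "eventually (\<lambda>h. h > 0 \<and> cB (\<kappa>*h) \<noteq> 0) (at_right 0)"
    using eventually_conj[OF eventually_at_right_less[of 0] ev1] by simp
  have "eventually (\<lambda>h. (\<kappa>^2*S) * g (\<kappa>*h) = lam h - (a0 + \<kappa>^2*S) - C * (\<kappa>^2*S) * (\<kappa>*h)^M) (at_right 0)"
    using ev
  proof (rule eventually_mono)
    fix h assume h: "h > 0 \<and> cB (\<kappa>*h) \<noteq> 0"
    define a where "a = cA (\<kappa>*h)"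
    define b where "b = cB (\<kappa>*h)"
    have b0: "b \<noteq> 0" and h0: "h \<noteq> 0" and k0: "\<kappa> \<noteq> 0" using h kp by (auto simp: b_def)
    have eqh: "S * a = (lam h - a0) * (b * h^2)" using eq[of h] h by (simp add: a_def b_def mult.assoc)
    have e: "lam h - a0 = S * a / (b * h^2)" using eqh b0 h0 by (simp add: eq_divide_eq)
    have f: "\<kappa>^2*S * (a / ((\<kappa>*h)^2 * b)) = S * a / (b * h^2)"
      using b0 h0 k0 by (simp add: power_mult_distrib)
    have "(\<kappa>^2*S) * g (\<kappa>*h) = \<kappa>^2*S * (a / ((\<kappa>*h)^2 * b)) - \<kappa>^2*S - C * (\<kappa>^2*S) * (\<kappa>*h)^M"
      unfolding g_def a_def b_def by (simp add: algebra_simps)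
    also have "\<dots> = lam h - (a0 + \<kappa>^2*S) - C * (\<kappa>^2*S) * (\<kappa>*h)^M"
      unfolding f e[symmetric] by simp
    finally show "(\<kappa>^2*S) * g (\<kappa>*h) = lam h - (a0 + \<kappa>^2*S) - C * (\<kappa>^2*S) * (\<kappa>*h)^M" .
  qed
  from iffD1[OF landau_o.big.in_cong[OF this] K4] show ?thesis .
qed

lemma KB: "p \<in> {1,2,3,4} \<Longrightarrow>
   (\<lambda>x. calA p x / (x^2 * calB p x) - 1 - Cconst p * x^(2*p+2)) \<in> O[at_right 0](\<lambda>x. x^(2*p+4))
   \<and> eventually (\<lambda>x. calB p x \<noteq> 0) (at_right 0)"
proof -
  assume "p \<in> {1,2,3,4}"
  then have "p = 1 \<or> p = 2 \<or> p = 3 \<or> p = 4" by auto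
  then show ?thesis
  proof (elim disjE)
    assume "p = 1" then show ?thesis using K_1 Bev_1 by simp
  next
    assume "p = 2" then show ?thesis using K_2 Bev_2 by simp
  next
    assume "p = 3" then show ?thesis using K_3 Bev_3 by simp
  next
    assume "p = 4" then show ?thesis using K_4 Bev_4 by simp
  qed
qed

theorem mainTheorem2:
  fixes n p :: nat and a :: "nat \<Rightarrow> real" and \<kappa> :: real and lam :: "real \<Rightarrow> real"
  assumes "n \<ge> 1"
    and "p \<in> {1, 2, 3, 4}"
    and "\<kappa> > 0"
    and "\<And>h. h > 0 \<Longrightarrow>
           (\<Sum>m = 1..n. a m * \<kappa> ^ (2 * m - 2)) * calA p (\<kappa> * h)
             = (lam h - a 0) * calB p (\<kappa> * h) * h ^ 2"
  shows "(\<lambda>h. lam h - (\<Sum>k = 0..n. a k * \<kappa> ^ (2 * k))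
             - (Cconst p * (\<Sum>k = 1..n. a k * \<kappa> ^ (2 * k))) * (\<kappa> * h) ^ (2 * p + 2))
         \<in> O[at_right 0](\<lambda>h. h ^ (2 * p + 4))"
proof -
  define S where "S = (\<Sum>m = 1..n. a m * \<kappa> ^ (2 * m - 2))"
  have S1: "(\<Sum>k = 1..n. a k * \<kappa> ^ (2 * k)) = \<kappa>^2 * S"
    unfolding S_def sum_distrib_left
  proof (rule sum.cong[OF refl])
    fix k assume "k \<in> {1..n}"
    then have "2 * k = 2 + (2 * k - 2)" by auto
    then have "\<kappa> ^ (2 * k) = \<kappa>^2 * \<kappa> ^ (2 * k - 2)" by (metis power_add)
    then show "a k * \<kappa> ^ (2 * k) = \<kappa>^2 * (a k * \<kappa> ^ (2 * k - 2))" by simp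
  qed
  have S0: "(\<Sum>k = 0..n. a k * \<kappa> ^ (2 * k)) = a 0 + \<kappa>^2 * S"
  proof -
    have "(\<Sum>k = 0..n. a k * \<kappa> ^ (2 * k)) = a 0 * \<kappa> ^ (2 * 0) + (\<Sum>k = Suc 0..n. a k * \<kappa> ^ (2 * k))"
      by (rule sum.atLeast_Suc_atMost) simp
    then show ?thesis using S1 by simp
  qed
  from KB[OF assms(2)] have K: "(\<lambda>x. calA p x / (x^2 * calB p x) - 1 - Cconst p * x^(2*p+2)) \<in> O[at_right 0](\<lambda>x. x^(2*p+4))"
    and B: "eventually (\<lambda>x. calB p x \<noteq> 0) (at_right 0)" by auto
  have eq: "\<And>h. h > 0 \<Longrightarrow> S * calA p (\<kappa>*h) = (lam h - a 0) * calB p (\<kappa>*h) * h^2"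
    using assms(4) unfolding S_def .
  show ?thesis unfolding S0 S1 by (rule generic[OF K B assms(3) eq])
qed

end
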